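(* In the setting of the simple-region decomposition (split $\Gamma$ at the $y$-portals $\operatorname{portal}_y(v_{WNW}(H))$, $\operatorname{portal}_y(v_{ESE}(H))$ and at the nodes $v_{WNW}(H)$, $v_{ESE}(H)$ for every inner hole $H\in\mathcal H$), the number of gates, i.e. of nonempty sets of the form $R\cap P$ where $R$ is (the node set of) a resulting region and $P$ is one of the splitting portals, is at most $6|\mathcal H|$.
   Context: $G_\Delta$ is the infinite regular triangular grid graph (neighbour directions E, W, NNE, SSW, NNW, SSE; $y$-axis = NNE–SSW; WNW/ESE perpendicular to it). $\Gamma=(V,E)$ is a triangular grid graph (connected subgraph of $G_\Delta$ induced by a finite $V$) and $\mathcal H$ its set of inner holes (bounded connected components of the subgraph of $G_\Delta$ induced by $V_\Delta\setminus V$). The boundary of a hole $H$ is the set of nodes of $V$ adjacent to a node of $H$; $v_{WNW}(H)$ ($v_{ESE}(H)$) is the boundary node of $H$ extremal in direction WNW (ESE), ties broken NNE-most. A $y$-portal is a connected component of $(V,E_y)$ with $E_y$ the edges parallel to the $y$-axis. Splitting at a $y$-portal $P$ replaces each $p\in P$ by copies $p_W$ (adjacent to the $W$-copies of its neighbours on $P$ and to $p$'s neighbours in directions NNW, W) and $p_E$ (adjacent to the $E$-copies of its neighbours on $P$ and to $p$'s neighbours in directions SSE, E). Splitting at $v_{WNW}(H)$ (whose adjacent hole point lies in direction E or SSE) replaces $v_E$ by $v_E^N$ (neighbours of $v_E$ in directions NNE, E) and $v_E^S$ (neighbours of $v_E$ in directions SSW, SSE); splitting at $v_{ESE}(H)$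 (adjacent hole point in direction W or NNW) replaces $v_W$ by $v_W^S$ (neighbours in directions SSW, W) and $v_W^N$ (neighbours in directions NNE, NNW). The resulting regions are the grid-point sets underlying the connected components of the split graph. *)

theory Defs
  imports Main
begin

text \<open>Triangular grid in axial coordinates (a,b) :: int \<times> int.
  The y-axis is the NNE--SSW direction (first coordinate constant).
  The extent in direction ESE is measured by the first coordinate, the
  extent in direction NNE (for fixed first coordinate) by the second one.\<close>

definition dE :: "int \<times> int" where "dE = (1,0)"
definition dW :: "int \<times> int" where "dW = (-1,0)"
definition dNNE :: "int \<times> int" where "dNNE = (0,1)"
definition dSSW :: "int \<times> int" where "dSSW = (0,-1)"
definition dNNW :: "int \<times> int" where "dNNW = (-1,1)"
definition dSSE :: "int \<times> int" where "dSSE = (1,-1)"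

definition dirs6 :: "(int \<times> int) set" where
  "dirs6 = {dE, dW, dNNE, dSSW, dNNW, dSSE}"

definition diff :: "int \<times> int \<Rightarrow> int \<times> int \<Rightarrow> int \<times> int" where
  "diff p q = (fst q - fst p, snd q - snd p)"

definition grid_adj :: "int \<times> int \<Rightarrow> int \<times> int \<Rightarrow> bool" where
  "grid_adj p q \<longleftrightarrow> diff p q \<in> dirs6"

definition comp :: "('a \<Rightarrow> 'a \<Rightarrow> bool) \<Rightarrow> 'a set \<Rightarrow> 'a \<Rightarrow> 'a set" where
  "comp r S x = {y. x \<in> S \<and> y \<in> S \<and> (\<lambda>a b. a \<in> S \<and> b \<in> S \<and> r a b)\<^sup>*\<^sup>* x y}"

definition grid_connected :: "(int \<times> int) set \<Rightarrow> bool" where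
  "grid_connected V \<longleftrightarrow> (\<forall>x\<in>V. \<forall>y\<in>V. y \<in> comp grid_adj V x)"

text \<open>Inner holes: bounded (= finite) components of the complement.\<close>
definition holes :: "(int \<times> int) set \<Rightarrow> (int \<times> int) set set" where
  "holes V = {comp grid_adj (- V) x | x. x \<notin> V \<and> finite (comp grid_adj (- V) x)}"

definition hole_boundary :: "(int \<times> int) set \<Rightarrow> (int \<times> int) set \<Rightarrow> (int \<times> int) set" where
  "hole_boundary V H = {v \<in> V. \<exists>h\<in>H. grid_adj v h}"

definition v_WNW :: "(int \<times> int) set \<Rightarrow> (int \<times> int) set \<Rightarrow> int \<times> int" where
  "v_WNW V H = (THE v. v \<in> hole_boundary V H \<and>
     (\<forall>u\<in>hole_boundary V H. fst v < fst u \<or> (fst v = fst u \<and> snd u \<le> snd v)))"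

definition v_ESE :: "(int \<times> int) set \<Rightarrow> (int \<times> int) set \<Rightarrow> int \<times> int" where
  "v_ESE V H = (THE v. v \<in> hole_boundary V H \<and>
     (\<forall>u\<in>hole_boundary V H. fst u < fst v \<or> (fst v = fst u \<and> snd u \<le> snd v)))"

definition y_adj :: "int \<times> int \<Rightarrow> int \<times> int \<Rightarrow> bool" where
  "y_adj p q \<longleftrightarrow> diff p q \<in> {dNNE, dSSW}"

definition portal_y :: "(int \<times> int) set \<Rightarrow> int \<times> int \<Rightarrow> (int \<times> int) set" where
  "portal_y V v = comp y_adj V v"

definition split_portals :: "(int \<times> int) set \<Rightarrow> (int \<times> int) set set" where
  "split_portals V = (\<Union>H\<in>holes V. {portal_y V (v_WNW V H), portal_y V (v_ESE V H)})"

text \<open>A copy carries the set of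
  directions of the original node's neighbours it inherits, and a side
  (0 = unsplit, 1 = West copy, 2 = East copy); edges along a portal
  connect only copies on the same side.\<close>
datatype copy = Orig | CW | CE | CWS | CWN | CEN | CES

fun copy_dirs :: "copy \<Rightarrow> (int \<times> int) set" where
  "copy_dirs Orig = dirs6"
| "copy_dirs CW = {dNNE, dSSW, dNNW, dW}"
| "copy_dirs CE = {dNNE, dSSW, dSSE, dE}"
| "copy_dirs CWS = {dSSW, dW}"
| "copy_dirs CWN = {dNNE, dNNW}"
| "copy_dirs CEN = {dNNE, dE}"
| "copy_dirs CES = {dSSW, dSSE}"

fun copy_side :: "copy \<Rightarrow> nat" where
  "copy_side Orig = 0"
| "copy_side CW = 1" | "copy_side CWS = 1" | "copy_side CWN = 1"
| "copy_side CE = 2" | "copy_side CEN = 2" | "copy_side CES = 2"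

definition split_nodes :: "(int \<times> int) set \<Rightarrow> ((int \<times> int) \<times> copy) set" where
  "split_nodes V = {(p, c). p \<in> V \<and>
     (if p \<in> \<Union>(split_portals V)
      then c \<in> (if p \<in> v_ESE V ` holes V then {CWS, CWN} else {CW})
              \<union> (if p \<in> v_WNW V ` holes V then {CEN, CES} else {CE})
      else c = Orig)}"

definition split_adj :: "(int \<times> int) \<times> copy \<Rightarrow> (int \<times> int) \<times> copy \<Rightarrow> bool" where
  "split_adj x y \<longleftrightarrow>
     (let d = diff (fst x) (fst y) in
       d \<in> dirs6 \<and> d \<in> copy_dirs (snd x) \<and> diff (fst y) (fst x) \<in> copy_dirs (snd y) \<and>
       (d \<in> {dNNE, dSSW} \<longrightarrow> copy_side (snd x) = copy_side (snd y)))"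

definition regions :: "(int \<times> int) set \<Rightarrow> (int \<times> int) set set" where
  "regions V = {fst ` comp split_adj (split_nodes V) x | x. x \<in> split_nodes V}"

definition gates :: "(int \<times> int) set \<Rightarrow> (int \<times> int) set set" where
  "gates V = {R \<inter> P | R P. R \<in> regions V \<and> P \<in> split_portals V \<and> R \<inter> P \<noteq> {}}"

end

theory Submission
  imports Defs
begin

lemma comp_memD: "y \<in> comp r S x \<Longrightarrow> x \<in> S \<and> y \<in> S \<and> (\<lambda>a b. a \<in> S \<and> b \<in> S \<and> r a b)\<^sup>*\<^sup>* x y"
  by (simp add: comp_def)

lemma comp_self: "x \<in> S \<Longrightarrow> x \<in> comp r S x"
  by (simp add: comp_def)

lemma comp_trans: "y \<in> comp r S x \<Longrightarrow> z \<in> comp r S y \<Longrightarrow> z \<in> comp r S x"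
  unfolding comp_def by (auto intro: rtranclp_trans)

lemma comp_step: "x \<in> S \<Longrightarrow> y \<in> S \<Longrightarrow> r x y \<Longrightarrow> y \<in> comp r S x"
  unfolding comp_def by auto

lemma comp_sym:
  assumes sym: "\<And>a b. r a b \<Longrightarrow> r b a" and y: "y \<in> comp r S x"
  shows "x \<in> comp r S y"
proof -
  let ?R = "\<lambda>a b. a \<in> S \<and> b \<in> S \<and> r a b"
  have "?R\<^sup>*\<^sup>* x y" "x \<in> S" "y \<in> S" using y by (auto simp: comp_def)
  have "?R\<^sup>*\<^sup>* y x" using \<open>?R\<^sup>*\<^sup>* x y\<close>
  proof (induction rule: rtranclp_induct)
    case base then show ?case by simp
  next
    case (step b c)
    then have "?R c b" using sym by auto
    from this step.IH show ?case by (rule converse_rtranclp_into_rtranclp)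
  qed
  then show ?thesis using \<open>x \<in> S\<close> \<open>y \<in> S\<close> by (simp add: comp_def)
qed

lemma comp_eq:
  assumes sym: "\<And>a b. r a b \<Longrightarrow> r b a" and y: "y \<in> comp r S x"
  shows "comp r S y = comp r S x"
  using comp_trans[OF y] comp_trans[OF comp_sym[OF sym y]] by blast

lemma dirs6_neg: "(x,y) \<in> dirs6 \<Longrightarrow> (-x,-y) \<in> dirs6"
  by (auto simp: dirs6_def dE_def dW_def dNNE_def dSSW_def dNNW_def dSSE_def)
lemma vert_neg: "(x,y) \<in> {dNNE, dSSW} \<Longrightarrow> (-x,-y) \<in> {dNNE, dSSW}"
  by (auto simp: dNNE_def dSSW_def)

lemma grid_adj_sym: "grid_adj a b \<Longrightarrow> grid_adj b a"
proof -
  assume h: "grid_adj a b"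
  obtain a1 a2 b1 b2 where ab: "a = (a1,a2)" "b = (b1,b2)" by (metis prod.collapse)
  have e: "a1 - b1 = - (b1 - a1)" "a2 - b2 = - (b2 - a2)" by simp_all
  show ?thesis using h dirs6_neg[of "b1 - a1" "b2 - a2"] unfolding ab grid_adj_def diff_def fst_conv snd_conv e
    by blast
qed

lemma y_adj_sym: "y_adj a b \<Longrightarrow> y_adj b a"
proof -
  assume h: "y_adj a b"
  obtain a1 a2 b1 b2 where ab: "a = (a1,a2)" "b = (b1,b2)" by (metis prod.collapse)
  have e: "a1 - b1 = - (b1 - a1)" "a2 - b2 = - (b2 - a2)" by simp_all
  show ?thesis using h vert_neg[of "b1 - a1" "b2 - a2"] unfolding ab y_adj_def diff_def fst_conv snd_conv e
    by blast
qed

lemma sa_aux: "(x,y) \<in> dirs6 \<and> (x,y) \<in> copy_dirs c \<and> (-x,-y) \<in> copy_dirs c' \<and> ((x,y) \<in> {dNNE,dSSW} \<longrightarrow> copy_side c = copy_side c')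
  \<Longrightarrow> (-x,-y) \<in> dirs6 \<and> (-x,-y) \<in> copy_dirs c' \<and> (- (-x), - (-y)) \<in> copy_dirs c \<and> ((-x,-y) \<in> {dNNE,dSSW} \<longrightarrow> copy_side c' = copy_side c)"
  by (cases c; cases c'; auto simp: dirs6_def dE_def dW_def dNNE_def dSSW_def dNNW_def dSSE_def)

lemma split_adj_sym: "split_adj a b \<Longrightarrow> split_adj b a"
proof -
  assume h: "split_adj a b"
  obtain a1 a2 c b1 b2 c' where ab: "a = ((a1,a2),c)" "b = ((b1,b2),c')" by (metis prod.collapse)
  have e: "a1 - b1 = - (b1 - a1)" "a2 - b2 = - (b2 - a2)" by simp_all
  show ?thesis using h sa_aux[of "b1 - a1" "b2 - a2" c c'] unfolding ab split_adj_def Let_def diff_def fst_conv snd_conv e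
    by blast
qed

lemma adj_downW: "c \<in> {CW,CWS} \<Longrightarrow> c' \<in> {CW,CWN} \<Longrightarrow> split_adj ((a,b),c) ((a,b-1),c')"
  unfolding split_adj_def Let_def diff_def
  by (cases c; cases c'; simp add: dirs6_def dE_def dW_def dNNE_def dSSW_def dNNW_def dSSE_def)
lemma adj_downE: "c \<in> {CE,CES} \<Longrightarrow> c' \<in> {CE,CEN} \<Longrightarrow> split_adj ((a,b),c) ((a,b-1),c')"
  unfolding split_adj_def Let_def diff_def
  by (cases c; cases c'; simp add: dirs6_def dE_def dW_def dNNE_def dSSW_def dNNW_def dSSE_def)

lemma y_path:
  assumes "(\<lambda>a b. a \<in> S \<and> b \<in> S \<and> y_adj a b)\<^sup>*\<^sup>* x y" "x \<in> S"
  shows "fst y = fst x \<and> (\<forall>t. min (snd x) (snd y) \<le> t \<and> t \<le> max (snd x) (snd y) \<longrightarrow> (fst x, t) \<in> comp y_adj S x)"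
  using assms(1)
proof (induction rule: rtranclp_induct)
  case base
  then show ?case using assms(2) by (auto simp: comp_self)
next
  case (step y z)
  have z: "fst z = fst y" "snd z = snd y + 1 \<or> snd z = snd y - 1"
    using step(2) by (auto simp: y_adj_def diff_def dNNE_def dSSW_def)
  have "(\<lambda>a b. a \<in> S \<and> b \<in> S \<and> y_adj a b)\<^sup>*\<^sup>* x z"
    using step(1,2) by (rule rtranclp.rtrancl_into_rtrancl)
  then have zc: "z \<in> comp y_adj S x"
    using step(2) assms(2) unfolding comp_def by auto
  show ?case
  proof (intro conjI allI impI)
    show "fst z = fst x" using z step by simp
    fix t assume t: "min (snd x) (snd z) \<le> t \<and> t \<le> max (snd x) (snd z)"
    show "(fst x, t) \<in> comp y_adj S x"
    proof (cases "min (snd x) (snd y) \<le> t \<and> t \<le> max (snd x) (snd y)")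
      case True then show ?thesis using step by blast
    next
      case False
      then have "t = snd z" using t z by auto
      then have "(fst x, t) = z" using z step by (simp add: prod_eq_iff)
      then show ?thesis using zc by simp
    qed
  qed
qed

lemma portal_fst: "p \<in> comp y_adj V v \<Longrightarrow> fst p = fst v"
proof -
  assume "p \<in> comp y_adj V v"
  from comp_memD[OF this] have "(\<lambda>a b. a \<in> V \<and> b \<in> V \<and> y_adj a b)\<^sup>*\<^sup>* v p" "v \<in> V" by auto
  from y_path[OF this] show ?thesis by simp
qed

lemma portal_between:
  assumes "p \<in> comp y_adj V v" "q \<in> comp y_adj V v" "snd q \<le> t" "t \<le> snd p"
  shows "(fst v, t) \<in> comp y_adj V v"
proof -
  have e: "comp y_adj V q = comp y_adj V v" using comp_eq[OF _ assms(2)] y_adj_sym by blast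
  have "p \<in> comp y_adj V q" using e assms by simp
  from comp_memD[OF this] have "(\<lambda>a b. a \<in> V \<and> b \<in> V \<and> y_adj a b)\<^sup>*\<^sup>* q p" "q \<in> V" by auto
  from y_path[OF this] have "(fst q, t) \<in> comp y_adj V q"
    using assms(3,4) by auto
  then show ?thesis using e portal_fst[OF assms(2)] by simp
qed

lemma holes_finite:
  assumes "finite V"
  shows "finite (holes V)"
proof -
  define N where "N = (\<lambda>(v,d). (fst v + fst d, snd v + snd d)) ` (V \<times> dirs6)"
  have fN: "finite N" unfolding N_def using assms by (simp add: dirs6_def)
  have "holes V \<subseteq> comp grid_adj (- V) ` N"
  proof
    fix H assume "H \<in> holes V"
    then obtain x where x: "x \<notin> V" "finite (comp grid_adj (- V) x)" "H = comp grid_adj (- V) x"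
      by (auto simp: holes_def)
    have "x \<in> H" using x(1) comp_self[of x "-V" grid_adj] by (simp add: x(3))
    define m where "m = Max (fst ` H)"
    have fH: "finite H" using x by simp
    have "m \<in> fst ` H" unfolding m_def using fH \<open>x \<in> H\<close> by (intro Max_in) auto
    then obtain h where h: "h \<in> H" "fst h = m" by auto
    define q where "q = (fst h + 1, snd h)"
    have ga: "grid_adj h q" by (simp add: q_def grid_adj_def diff_def dirs6_def dE_def)
    have "q \<notin> H"
    proof
      assume "q \<in> H"
      then have "fst q \<le> m" unfolding m_def using fH by (intro Max_ge) auto
      then show False using h by (simp add: q_def)
    qed
    have hH: "h \<in> comp grid_adj (- V) x" using h(1) x(3) by simp
    have "q \<in> V"
    proof (rule ccontr)
      assume "q \<notin> V"
      then have qV: "q \<in> - V" by simp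
      have "h \<in> - V" using comp_memD[OF hH] by simp
      then have "q \<in> comp grid_adj (- V) h" using qV ga by (rule comp_step[of h "- V" q grid_adj])
      then have "q \<in> comp grid_adj (- V) x" by (rule comp_trans[OF hH])
      then have "q \<in> H" by (simp add: x(3))
      then show False using \<open>q \<notin> H\<close> by simp
    qed
    have hq: "h = (\<lambda>(v,d). (fst v + fst d, snd v + snd d)) (q, dW)" by (simp add: q_def dW_def)
    have "(q, dW) \<in> V \<times> dirs6" using \<open>q \<in> V\<close> by (simp add: dirs6_def)
    then have "h \<in> N" unfolding N_def using hq by blast
    moreover have "H = comp grid_adj (- V) h"
      using comp_eq[OF grid_adj_sym hH] x(3) by simp
    ultimately show "H \<in> comp grid_adj (- V) ` N" by blast
  qed
  then show ?thesis using fN finite_subset by blast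
qed


lemma sn_iff: "(p,c) \<in> split_nodes V \<longleftrightarrow> p \<in> V \<and>
     (if p \<in> \<Union>(split_portals V)
      then c \<in> (if p \<in> v_ESE V ` holes V then {CWS, CWN} else {CW})
              \<union> (if p \<in> v_WNW V ` holes V then {CEN, CES} else {CE})
      else c = Orig)"
  by (simp add: split_nodes_def)

lemma copy_cases: "c \<in> (if bE then {CWS,CWN} else {CW}) \<union> (if bW then {CEN,CES} else {CE}) \<Longrightarrow>
   (c = CWN \<and> bE) \<or> (c = CEN \<and> bW) \<or> c = (if bE then CWS else CW) \<or> c = (if bW then CES else CE)"
  by (cases bE; cases bW; auto)

lemma sn_portalD: "(p,c) \<in> split_nodes V \<Longrightarrow> p \<in> \<Union>(split_portals V) \<Longrightarrow>
   c \<in> (if p \<in> v_ESE V ` holes V then {CWS, CWN} else {CW})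
              \<union> (if p \<in> v_WNW V ` holes V then {CEN, CES} else {CE})"
  unfolding split_nodes_def by simp

lemma sn_introW: "p \<in> V \<Longrightarrow> p \<in> \<Union>(split_portals V) \<Longrightarrow>
   (p, if p \<in> v_ESE V ` holes V then CWN else CW) \<in> split_nodes V"
  unfolding split_nodes_def by (cases "p \<in> v_ESE V ` holes V") simp_all

lemma sn_introE: "p \<in> V \<Longrightarrow> p \<in> \<Union>(split_portals V) \<Longrightarrow>
   (p, if p \<in> v_WNW V ` holes V then CEN else CE) \<in> split_nodes V"
  unfolding split_nodes_def by (cases "p \<in> v_WNW V ` holes V") simp_all

lemma ifW: "(if b then CWS else CW) \<in> {CW, CWS}" by simp
lemma ifW': "(if b then CWN else CW) \<in> {CW, CWN}" by simp
lemma ifE: "(if b then CES else CE) \<in> {CE, CES}" by simp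
lemma ifE': "(if b then CEN else CE) \<in> {CE, CEN}" by simp

lemma portal_claim:
  assumes PS: "P \<in> split_portals V" and fV: "finite V"
  shows "\<exists>Rp. finite Rp \<and> card Rp \<le> 2 + card (P \<inter> v_ESE V ` holes V) + card (P \<inter> v_WNW V ` holes V) \<and>
     (\<forall>p\<in>P. \<forall>c. (p,c) \<in> split_nodes V \<longrightarrow> (\<exists>r\<in>Rp. r \<in> comp split_adj (split_nodes V) (p,c)))"
proof (cases "P = {}")
  case True then show ?thesis by (intro exI[of _ "{}"]) auto
next
  case False
  let ?SN = "split_nodes V"
  let ?vE = "v_ESE V ` holes V"
  let ?vW = "v_WNW V ` holes V"
  obtain v where Pv: "P = comp y_adj V v" using PS unfolding split_portals_def portal_y_def by blast
  have PU: "P \<subseteq> \<Union>(split_portals V)" using PS by auto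
  have PV: "P \<subseteq> V" using Pv comp_memD by fastforce
  have fP: "finite P" using PV fV finite_subset by blast
  define a where "a = fst v"
  define lo where "lo = Min (snd ` P)"
  define bot where "bot = (a, lo)"
  have fstP: "\<And>p. p \<in> P \<Longrightarrow> fst p = a" using portal_fst Pv a_def by blast
  have botP: "bot \<in> P"
  proof -
    obtain p where "p \<in> P" "snd p = lo" unfolding lo_def using False fP
      by (metis (mono_tags, lifting) Min_in empty_iff finite_imageI image_iff image_is_empty)
    then show ?thesis using fstP[of p] unfolding bot_def by (metis prod.collapse)
  qed
  have loP: "\<And>p. p \<in> P \<Longrightarrow> lo \<le> snd p" unfolding lo_def using fP by simp
  define RW where "RW = {(bot, if bot \<in> ?vE then CWS else CW)} \<union> (\<lambda>q. (q, CWN)) ` (P \<inter> ?vE)"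
  define RE where "RE = {(bot, if bot \<in> ?vW then CES else CE)} \<union> (\<lambda>q. (q, CEN)) ` (P \<inter> ?vW)"
  define Rp where "Rp = RW \<union> RE"
  have fR: "finite Rp" unfolding Rp_def RW_def RE_def using fP by auto
  have cW: "card RW \<le> 1 + card (P \<inter> ?vE)"
  proof -
    have "card RW \<le> card {(bot, if bot \<in> ?vE then CWS else CW)} + card ((\<lambda>q. (q, CWN)) ` (P \<inter> ?vE))"
      unfolding RW_def by (rule card_Un_le)
    also have "\<dots> \<le> 1 + card (P \<inter> ?vE)" using card_image_le[of "P \<inter> ?vE" "\<lambda>q. (q, CWN)"] fP by simp
    finally show ?thesis .
  qed
  have cE: "card RE \<le> 1 + card (P \<inter> ?vW)"
  proof -
    have "card RE \<le> card {(bot, if bot \<in> ?vW then CES else CE)} + card ((\<lambda>q. (q, CEN)) ` (P \<inter> ?vW))"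
      unfolding RE_def by (rule card_Un_le)
    also have "\<dots> \<le> 1 + card (P \<inter> ?vW)" using card_image_le[of "P \<inter> ?vW" "\<lambda>q. (q, CEN)"] fP by simp
    finally show ?thesis .
  qed
  have cR: "card Rp \<le> 2 + card (P \<inter> ?vE) + card (P \<inter> ?vW)"
    using card_Un_le[of RW RE] cW cE unfolding Rp_def by linarith
  have inW1: "(bot, if bot \<in> ?vE then CWS else CW) \<in> Rp" unfolding Rp_def RW_def by blast
  have inE1: "(bot, if bot \<in> ?vW then CES else CE) \<in> Rp" unfolding Rp_def RE_def by blast
  have inW2: "q \<in> P \<Longrightarrow> q \<in> ?vE \<Longrightarrow> (q, CWN) \<in> Rp" for q unfolding Rp_def RW_def by blast
  have inE2: "q \<in> P \<Longrightarrow> q \<in> ?vW \<Longrightarrow> (q, CEN) \<in> Rp" for q unfolding Rp_def RE_def by blast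
  have key: "\<And>p c. nat (snd p - lo) = n \<Longrightarrow> p \<in> P \<Longrightarrow> (p,c) \<in> ?SN \<Longrightarrow> \<exists>r\<in>Rp. r \<in> comp split_adj ?SN (p,c)" for n
  proof (induction n)
    case 0
    fix p c assume h: "nat (snd p - lo) = 0" "p \<in> P" "(p,c) \<in> ?SN"
    then have pb: "p = bot" using loP[of p] fstP[of p] unfolding bot_def by (simp add: prod_eq_iff)
    have cc: "(c = CWN \<and> p \<in> ?vE) \<or> (c = CEN \<and> p \<in> ?vW) \<or> c = (if p \<in> ?vE then CWS else CW) \<or> c = (if p \<in> ?vW then CES else CE)"
      using h(2) PU sn_portalD[OF h(3)] copy_cases by blast
    have "(p,c) \<in> Rp"
    proof -
      consider "c = CWN \<and> p \<in> ?vE" | "c = CEN \<and> p \<in> ?vW" | "c = (if p \<in> ?vE then CWS else CW)" | "c = (if p \<in> ?vW then CES else CE)"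
        using cc by blast
      then show ?thesis
      proof cases
        case 1 then show ?thesis using inW2 h(2) by blast
      next
        case 2 then show ?thesis using inE2 h(2) by blast
      next
        case 3 then show ?thesis using inW1 pb by simp
      next
        case 4 then show ?thesis using inE1 pb by simp
      qed
    qed
    then show "\<exists>r\<in>Rp. r \<in> comp split_adj ?SN (p,c)" using comp_self[OF h(3)] by blast
  next
    case (Suc m)
    fix p c assume h: "nat (snd p - lo) = Suc m" "p \<in> P" "(p,c) \<in> ?SN"
    have cc: "(c = CWN \<and> p \<in> ?vE) \<or> (c = CEN \<and> p \<in> ?vW) \<or> c = (if p \<in> ?vE then CWS else CW) \<or> c = (if p \<in> ?vW then CES else CE)"
      using h(2) PU sn_portalD[OF h(3)] copy_cases by blast
    define p' where "p' = (a, snd p - 1)"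
    have p'P: "p' \<in> P" unfolding p'_def a_def Pv
      by (rule portal_between[of p V v bot]) (use h botP Pv loP[of p] in \<open>auto simp: bot_def\<close>)
    have m: "nat (snd p' - lo) = m" using h by (simp add: p'_def)
    have p'U: "p' \<in> \<Union>(split_portals V)" using p'P PU by auto
    have p'V: "p' \<in> V" using p'P PV by auto
    have pp: "p = (a, snd p)" using fstP[OF h(2)] by (simp add: prod_eq_iff)
    have down: "\<exists>r\<in>Rp. r \<in> comp split_adj ?SN (p,c)" if c'SN: "(p',c') \<in> ?SN" and adj: "split_adj (p,c) (p',c')" for c'
    proof -
      have st: "(p',c') \<in> comp split_adj ?SN (p,c)" using comp_step[of "(p,c)" ?SN "(p',c')" split_adj, OF h(3) c'SN adj] .
      obtain r where "r \<in> Rp" "r \<in> comp split_adj ?SN (p',c')" using Suc.IH[OF m p'P c'SN] by blast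
      then show ?thesis using comp_trans[OF st] by blast
    qed
    show "\<exists>r\<in>Rp. r \<in> comp split_adj ?SN (p,c)"
    proof -
      consider "c = CWN \<and> p \<in> ?vE" | "c = CEN \<and> p \<in> ?vW" | "c = (if p \<in> ?vE then CWS else CW)" | "c = (if p \<in> ?vW then CES else CE)"
        using cc by blast
      then show ?thesis
      proof cases
        case 1
        then have "(p,c) \<in> Rp" using inW2 h(2) by blast
        then show ?thesis using comp_self[OF h(3)] by blast
      next
        case 2
        then have "(p,c) \<in> Rp" using inE2 h(2) by blast
        then show ?thesis using comp_self[OF h(3)] by blast
      next
        case 3
        then have cW: "c \<in> {CW, CWS}" using ifW by metis
        show ?thesis
        proof (rule down[OF sn_introW[OF p'V p'U]])
          show "split_adj (p,c) (p', if p' \<in> ?vE then CWN else CW)"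
            using adj_downW[OF cW ifW', of a "snd p"] pp unfolding p'_def by simp
        qed
      next
        case 4
        then have cE: "c \<in> {CE, CES}" using ifE by metis
        show ?thesis
        proof (rule down[OF sn_introE[OF p'V p'U]])
          show "split_adj (p,c) (p', if p' \<in> ?vW then CEN else CE)"
            using adj_downE[OF cE ifE', of a "snd p"] pp unfolding p'_def by simp
        qed
      qed
    qed
  qed
  show ?thesis using fR cR key by blast
qed


lemma portal_form: "P \<in> split_portals V \<Longrightarrow> \<exists>v. P = comp y_adj V v"
  unfolding split_portals_def portal_y_def by blast

lemma portals_disj: "P1 \<in> split_portals V \<Longrightarrow> P2 \<in> split_portals V \<Longrightarrow> x \<in> P1 \<Longrightarrow> x \<in> P2 \<Longrightarrow> P1 = P2"
proof -
  assume a: "P1 \<in> split_portals V" "P2 \<in> split_portals V" "x \<in> P1" "x \<in> P2"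
  obtain v1 v2 where "P1 = comp y_adj V v1" "P2 = comp y_adj V v2" using portal_form a(1,2) by metis
  then show ?thesis using comp_eq[of y_adj x V v1] comp_eq[of y_adj x V v2] y_adj_sym a(3,4) by metis
qed

lemma sum_portal_card:
  assumes fS: "finite (split_portals V)" and fA: "finite A"
  shows "(\<Sum>P\<in>split_portals V. card (P \<inter> A)) \<le> card A"
proof -
  have "(\<Sum>P\<in>split_portals V. card (P \<inter> A)) = card (\<Union>P\<in>split_portals V. P \<inter> A)"
  proof (rule card_UN_disjoint[symmetric])
    show "finite (split_portals V)" by (rule fS)
    show "\<forall>i\<in>split_portals V. finite (i \<inter> A)" using fA by simp
    show "\<forall>i\<in>split_portals V. \<forall>j\<in>split_portals V. i \<noteq> j \<longrightarrow> i \<inter> A \<inter> (j \<inter> A) = {}"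
      using portals_disj by blast
  qed
  also have "\<dots> \<le> card A" using fA by (intro card_mono) auto
  finally show ?thesis .
qed

theorem mainTheorem6:
  fixes V :: "(int \<times> int) set"
  assumes "finite V" and "V \<noteq> {}" and "grid_connected V"
  shows "card (gates V) \<le> 6 * card (holes V)"
proof -
  let ?SP = "split_portals V"
  let ?SN = "split_nodes V"
  let ?vE = "v_ESE V ` holes V"
  let ?vW = "v_WNW V ` holes V"
  have fH: "finite (holes V)" using holes_finite assms(1) .
  have fSP: "finite ?SP" unfolding split_portals_def using fH by auto
  have cSP: "card ?SP \<le> 2 * card (holes V)"
  proof -
    have "card ?SP \<le> (\<Sum>H\<in>holes V. card {portal_y V (v_WNW V H), portal_y V (v_ESE V H)})"
      unfolding split_portals_def by (rule card_UN_le[OF fH])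
    also have "\<dots> \<le> (\<Sum>H\<in>holes V. 2)" by (intro sum_mono) (simp add: card_insert_le_m1)
    finally show ?thesis by simp
  qed
  have "\<forall>P\<in>?SP. \<exists>Rp. finite Rp \<and> card Rp \<le> 2 + card (P \<inter> ?vE) + card (P \<inter> ?vW) \<and>
     (\<forall>p\<in>P. \<forall>c. (p,c) \<in> ?SN \<longrightarrow> (\<exists>r\<in>Rp. r \<in> comp split_adj ?SN (p,c)))"
    using portal_claim assms(1) by blast
  then obtain F where F: "\<And>P. P \<in> ?SP \<Longrightarrow> finite (F P) \<and> card (F P) \<le> 2 + card (P \<inter> ?vE) + card (P \<inter> ?vW) \<and>
     (\<forall>p\<in>P. \<forall>c. (p,c) \<in> ?SN \<longrightarrow> (\<exists>r\<in>F P. r \<in> comp split_adj ?SN (p,c)))"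
    by metis
  define g where "g P r = fst ` comp split_adj ?SN r \<inter> P" for P r
  have sub: "gates V \<subseteq> (\<Union>P\<in>?SP. g P ` F P)"
  proof
    fix G assume "G \<in> gates V"
    then obtain R P where G: "G = R \<inter> P" "R \<in> regions V" "P \<in> ?SP" "R \<inter> P \<noteq> {}"
      unfolding gates_def by blast
    obtain x where x: "x \<in> ?SN" "R = fst ` comp split_adj ?SN x" using G(2) unfolding regions_def by blast
    obtain p where p: "p \<in> R" "p \<in> P" using G(4) by blast
    obtain c where pc: "(p,c) \<in> comp split_adj ?SN x" using p(1) x(2) by force
    have pcSN: "(p,c) \<in> ?SN" using comp_memD[OF pc] by blast
    obtain r where r: "r \<in> F P" "r \<in> comp split_adj ?SN (p,c)" using F[OF G(3)] p(2) pcSN by blast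
    have e1: "comp split_adj ?SN (p,c) = comp split_adj ?SN x" by (rule comp_eq[OF split_adj_sym pc])
    have e2: "comp split_adj ?SN r = comp split_adj ?SN (p,c)" by (rule comp_eq[OF split_adj_sym r(2)])
    have "G = g P r" unfolding g_def G(1) x(2) e2 e1 ..
    then show "G \<in> (\<Union>P\<in>?SP. g P ` F P)" using G(3) r(1) by blast
  qed
  have fin: "finite (\<Union>P\<in>?SP. g P ` F P)" using fSP F by blast
  have "card (gates V) \<le> card (\<Union>P\<in>?SP. g P ` F P)" by (rule card_mono[OF fin sub])
  also have "\<dots> \<le> (\<Sum>P\<in>?SP. card (g P ` F P))" by (rule card_UN_le[OF fSP])
  also have "\<dots> \<le> (\<Sum>P\<in>?SP. card (F P))" by (intro sum_mono card_image_le) (use F in blast)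
  also have "\<dots> \<le> (\<Sum>P\<in>?SP. 2 + card (P \<inter> ?vE) + card (P \<inter> ?vW))" by (intro sum_mono) (use F in blast)
  also have "\<dots> = 2 * card ?SP + (\<Sum>P\<in>?SP. card (P \<inter> ?vE)) + (\<Sum>P\<in>?SP. card (P \<inter> ?vW))"
    by (simp only: sum.distrib sum_constant) simp
  also have "\<dots> \<le> 2 * card ?SP + card ?vE + card ?vW"
    using sum_portal_card[OF fSP, of ?vE] sum_portal_card[OF fSP, of ?vW] fH by simp
  also have "\<dots> \<le> 2 * card ?SP + card (holes V) + card (holes V)"
    using card_image_le[OF fH, of "v_ESE V"] card_image_le[OF fH, of "v_WNW V"] by simp
  also have "\<dots> \<le> 6 * card (holes V)" using cSP by simp
  finally show ?thesis .
qed

end
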